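(* For $n\ge1$, \begin{align*} \left|\Pi_n\wr C_2(1^11^1,1^12^2)\right|&=\sum_{j\geq 0}\sum_{i=1}^n \binom{i-1}{j}\binom{n-i}{j}j! +\sum_{j\geq 0} \sum_{i=2}^n(i-1)\binom{i-2}{j}\binom{n-i}{j}j!\\ &\quad+ \sum_{j\geq 0}\sum_{i=1}^{n-1}\binom{i-1}{j}\binom{n-i-1}{j}j!+1. \end{align*}
   Context: For $n\ge0$ let $[n]=\{1,\dots,n\}$. A $2$-colored set partition of $[n]$ is a set partition of $[n]$ together with an assignment of a color from $\{1,2\}$ to each element; $\Pi_n\wr C_2$ is the set of these. For a set $S$ of patterns, $\Pi_n\wr C_2(S)$ is the set of such colored partitions avoiding every pattern in $S$ in the pattern sense. For the patterns used here: $\sigma$ contains $1^11^1$ iff two elements in the same block have the same color; $\sigma$ contains $1^12^2$ iff there are $i<j$ in different blocks with $i$ colored $1$ and $j$ colored $2$. Binomial coefficients $\binom{a}{b}$ with $b>a$ or $a<0$ are $0$. *)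

theory Defs
  imports Main "HOL-Library.Disjoint_Sets" "HOL-Library.FuncSet"
begin

definition colored_partitions :: "nat \<Rightarrow> (nat set set \<times> (nat \<Rightarrow> nat)) set" where
  "colored_partitions n =
     {(P, c). partition_on {1..n} P \<and> c \<in> {1..n} \<rightarrow>\<^sub>E {1, 2}}"

definition contains_11_11 :: "nat set set \<times> (nat \<Rightarrow> nat) \<Rightarrow> bool" where
  "contains_11_11 \<sigma> = (case \<sigma> of (P, c) \<Rightarrow>
     (\<exists>B\<in>P. \<exists>i\<in>B. \<exists>j\<in>B. i < j \<and> c i = c j))"

definition contains_11_22 :: "nat set set \<times> (nat \<Rightarrow> nat) \<Rightarrow> bool" where
  "contains_11_22 \<sigma> = (case \<sigma> of (P, c) \<Rightarrow>
     (\<exists>B\<in>P. \<exists>B'\<in>P. B \<noteq> B' \<and> (\<exists>i\<in>B. \<exists>j\<in>B'. i < j \<and> c i = 1 \<and> c j = 2)))"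

definition avoiders :: "nat \<Rightarrow> (nat set set \<times> (nat \<Rightarrow> nat)) set" where
  "avoiders n = {\<sigma> \<in> colored_partitions n. \<not> contains_11_11 \<sigma> \<and> \<not> contains_11_22 \<sigma>}"

end

theory Submission
  imports Defs
begin


fun M :: "nat \<Rightarrow> nat \<Rightarrow> nat" where
  "M 0 b = 1"
| "M (Suc a) b = M a b + b * M a (b - 1)"

lemma choose_fact_Suc: "(b choose Suc j) * fact (Suc j) = b * (((b - 1) choose j) * fact j)"
proof (cases b)
  case 0 then show ?thesis by simp
next
  case (Suc b')
  have h: "Suc j * (Suc b' choose Suc j) = Suc b' * (b' choose j)" by (rule Suc_times_binomial)
  have "(Suc b' choose Suc j) * fact (Suc j) = (Suc j * (Suc b' choose Suc j)) * fact j"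
    by (simp only: fact_Suc mult.assoc mult.commute mult.left_commute of_nat_id)
  also have "\<dots> = Suc b' * ((b' choose j) * fact j)" by (simp only: h mult.assoc)
  finally show ?thesis using Suc by simp
qed

lemma M_closed: "M a b = (\<Sum>j\<le>a. (a choose j) * (b choose j) * fact j)"
proof (induction a arbitrary: b)
  case 0 then show ?case by simp
next
  case (Suc a)
  have "(\<Sum>j\<le>Suc a. (Suc a choose j) * (b choose j) * fact j)
      = 1 + (\<Sum>j\<le>a. (Suc a choose Suc j) * (b choose Suc j) * fact (Suc j))"
    by (subst sum.atMost_Suc_shift) simp
  also have "\<dots> = 1 + (\<Sum>j\<le>a. (a choose j) * (b * (((b - 1) choose j) * fact j))
                 + (a choose Suc j) * (b choose Suc j) * fact (Suc j))"
    by (rule arg_cong[where f="\<lambda>x. 1 + x"], rule sum.cong, simp,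
        simp only: binomial_Suc_Suc choose_fact_Suc[symmetric], simp add: algebra_simps)
  also have "\<dots> = b * (\<Sum>j\<le>a. (a choose j) * ((b - 1) choose j) * fact j)
      + (1 + (\<Sum>j\<le>a. (a choose Suc j) * (b choose Suc j) * fact (Suc j)))"
    unfolding sum.distrib sum_distrib_left by (simp add: ac_simps)
  also have "1 + (\<Sum>j\<le>a. (a choose Suc j) * (b choose Suc j) * fact (Suc j))
      = (\<Sum>j\<le>Suc a. (a choose j) * (b choose j) * fact j)"
    by (subst sum.atMost_Suc_shift) simp
  also have "\<dots> = (\<Sum>j\<le>a. (a choose j) * (b choose j) * fact j)"
    by simp
  finally show ?case using Suc.IH[of b] Suc.IH[of "b-1"] by simp
qed

lemma M_ext: "a \<le> k \<Longrightarrow> (\<Sum>j\<le>k. (a choose j) * (b choose j) * fact j) = M a b"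
proof (induction k rule: dec_induct)
  case base then show ?case by (simp add: M_closed)
next
  case (step k) then show ?case by simp
qed

lemma M_sym: "M a b = M b a"
proof -
  have "M a b = (\<Sum>j\<le>a+b. (a choose j) * (b choose j) * fact j)" by (simp add: M_ext)
  also have "\<dots> = (\<Sum>j\<le>b+a. (b choose j) * (a choose j) * fact j)" by (simp add: algebra_simps)
  also have "\<dots> = M b a" by (simp add: M_ext)
  finally show ?thesis .
qed



lemma part_same: "partition_on A P \<Longrightarrow> B \<in> P \<Longrightarrow> C \<in> P \<Longrightarrow> x \<in> B \<Longrightarrow> x \<in> C \<Longrightarrow> B = C"
  unfolding partition_on_def disjoint_def by blast

lemma part_remove: "partition_on A P \<Longrightarrow> B \<in> P \<Longrightarrow> partition_on (A - B) (P - {B})"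
  unfolding partition_on_def disjoint_def by blast

lemma part_insert: "partition_on A Q \<Longrightarrow> B \<noteq> {} \<Longrightarrow> B \<inter> A = {} \<Longrightarrow> partition_on (A \<union> B) (insert B Q)"
  unfolding partition_on_def disjoint_def by blast

definition PM :: "nat set \<Rightarrow> nat set \<Rightarrow> nat set set set" where
  "PM X Y = {P. partition_on (X \<union> Y) P \<and> (\<forall>B\<in>P. (\<exists>x. B = {x}) \<or> (\<exists>x\<in>X. \<exists>y\<in>Y. B = {x, y}))}"

lemma finite_PM: "finite X \<Longrightarrow> finite Y \<Longrightarrow> finite (PM X Y)"
proof -
  assume "finite X" "finite Y"
  have "PM X Y \<subseteq> Pow (Pow (X \<union> Y))"
    unfolding PM_def partition_on_def by blast
  then show ?thesis using \<open>finite X\<close> \<open>finite Y\<close> by (meson finite_Pow_iff finite_UnI finite_subset)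
qed

lemma PM_empty: "PM {} Y = {(\<lambda>y. {y}) ` Y}"
proof
  show "{(\<lambda>y. {y}) ` Y} \<subseteq> PM {} Y"
    using partition_on_singletons[of Y] by (auto simp: PM_def)
  show "PM {} Y \<subseteq> {(\<lambda>y. {y}) ` Y}"
  proof
    fix P assume "P \<in> PM {} Y"
    then have p: "partition_on Y P" and s: "\<forall>B\<in>P. \<exists>x. B = {x}" by (auto simp: PM_def)
    have "P = (\<lambda>y. {y}) ` Y"
    proof
      show "P \<subseteq> (\<lambda>y. {y}) ` Y" using s partition_onD1[OF p] by fastforce
      show "(\<lambda>y. {y}) ` Y \<subseteq> P"
      proof
        fix B assume "B \<in> (\<lambda>y. {y}) ` Y"
        then obtain y where y: "y \<in> Y" "B = {y}" by auto
        then obtain C where "C \<in> P" "y \<in> C" using partition_onD1[OF p] by auto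
        then show "B \<in> P" using s y by fastforce
      qed
    qed
    then show "P \<in> {(\<lambda>y. {y}) ` Y}" by simp
  qed
qed

lemma card_PM_remove:
  assumes xn: "x \<notin> X" "x \<notin> Y" and B: "B = insert x D" and D: "D \<subseteq> Y"
    and blocks: "\<And>P. P \<in> PM (insert x X) Y \<Longrightarrow> B \<in> P \<Longrightarrow> P - {B} \<in> PM X (Y - D)"
    and blocks2: "\<And>Q. Q \<in> PM X (Y - D) \<Longrightarrow> insert B Q \<in> PM (insert x X) Y"
  shows "card {P \<in> PM (insert x X) Y. B \<in> P} = card (PM X (Y - D))"
proof (rule bij_betw_same_card[of "\<lambda>P. P - {B}"], rule bij_betwI[where g="insert B"])
  show "(\<lambda>P. P - {B}) \<in> {P \<in> PM (insert x X) Y. B \<in> P} \<rightarrow> PM X (Y - D)" using blocks by auto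
  show "insert B \<in> PM X (Y - D) \<rightarrow> {P \<in> PM (insert x X) Y. B \<in> P}" using blocks2 by auto
  show "insert B (P - {B}) = P" if "P \<in> {P \<in> PM (insert x X) Y. B \<in> P}" for P using that by auto
  show "insert B Q - {B} = Q" if "Q \<in> PM X (Y - D)" for Q
  proof -
    have "B \<notin> Q" using that xn unfolding PM_def partition_on_def B by blast
    then show ?thesis by simp
  qed
qed



lemma card_PM:
  assumes "finite X" "finite Y" "X \<inter> Y = {}"
  shows "card (PM X Y) = M (card X) (card Y)"
  using assms
proof (induction X arbitrary: Y rule: finite_induct)
  case empty
  then show ?case by (simp add: PM_empty)
next
  case (insert x X)
  have xX: "x \<notin> X" and xY: "x \<notin> Y" and XY: "X \<inter> Y = {}" using insert by auto
  define A0 where "A0 = {P \<in> PM (insert x X) Y. {x} \<in> P}"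
  define A where "A = (\<lambda>y. {P \<in> PM (insert x X) Y. {x, y} \<in> P})"
  have split: "PM (insert x X) Y = A0 \<union> (\<Union>y\<in>Y. A y)"
  proof
    show "PM (insert x X) Y \<subseteq> A0 \<union> (\<Union>y\<in>Y. A y)"
    proof
      fix P assume P: "P \<in> PM (insert x X) Y"
      then have p: "partition_on (insert x X \<union> Y) P"
        and b: "\<forall>B\<in>P. (\<exists>z. B = {z}) \<or> (\<exists>u\<in>insert x X. \<exists>v\<in>Y. B = {u, v})" by (auto simp: PM_def)
      obtain B where B: "B \<in> P" "x \<in> B" using partition_onD1[OF p] by blast
      from b B consider "B = {x}" | v where "v \<in> Y" "B = {x, v}"
        using xY by fastforce
      then show "P \<in> A0 \<union> (\<Union>y\<in>Y. A y)"
        using B P unfolding A0_def A_def by cases auto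
    qed
    show "A0 \<union> (\<Union>y\<in>Y. A y) \<subseteq> PM (insert x X) Y" unfolding A0_def A_def by auto
  qed
  have fin: "finite (PM (insert x X) Y)" using insert by (simp add: finite_PM)
  have c0: "card A0 = card (PM X Y)"
  proof -
    have "card A0 = card (PM X (Y - {}))"
      unfolding A0_def
    proof (rule card_PM_remove[OF xX xY])
      show "{x} = insert x {}" by simp
      show "{} \<subseteq> Y" by simp
      fix P assume P: "P \<in> PM (insert x X) Y" "{x} \<in> P"
      then have p: "partition_on (insert x X \<union> Y) P"
        and b: "\<forall>B\<in>P. (\<exists>z. B = {z}) \<or> (\<exists>u\<in>insert x X. \<exists>v\<in>Y. B = {u, v})" by (auto simp: PM_def)
      have p2: "partition_on (X \<union> (Y - {})) (P - {{x}})"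
        using part_remove[OF p P(2)] xX xY
        by (metis Diff_empty Diff_insert0 Un_Diff Un_insert_left insert_Diff1 singletonI)
      have "\<forall>B\<in>P - {{x}}. (\<exists>z. B = {z}) \<or> (\<exists>u\<in>X. \<exists>v\<in>Y - {}. B = {u, v})"
      proof
        fix B assume B: "B \<in> P - {{x}}"
        then have "x \<notin> B" using part_same[OF p _ P(2), of B x] by auto
        then show "(\<exists>z. B = {z}) \<or> (\<exists>u\<in>X. \<exists>v\<in>Y - {}. B = {u, v})" using b B by auto
      qed
      then show "P - {{x}} \<in> PM X (Y - {})" using p2 by (simp add: PM_def)
    next
      fix Q assume Q: "Q \<in> PM X (Y - {})"
      then have p: "partition_on (X \<union> Y) Q"
        and b: "\<forall>B\<in>Q. (\<exists>z. B = {z}) \<or> (\<exists>u\<in>X. \<exists>v\<in>Y. B = {u, v})" by (auto simp: PM_def)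
      have "partition_on (insert x X \<union> Y) (insert {x} Q)"
        using part_insert[OF p, of "{x}"] xX xY by simp
      then show "insert {x} Q \<in> PM (insert x X) Y" using b by (auto simp: PM_def)
    qed
    then show ?thesis by simp
  qed
  have cy: "card (A y) = card (PM X (Y - {y}))" if y: "y \<in> Y" for y
    unfolding A_def
  proof (rule card_PM_remove[OF xX xY])
    show "{x, y} = insert x {y}" by simp
    show "{y} \<subseteq> Y" using y by simp
    have yX: "y \<notin> X" using y XY by auto
    fix P assume P: "P \<in> PM (insert x X) Y" "{x, y} \<in> P"
    then have p: "partition_on (insert x X \<union> Y) P"
      and b: "\<forall>B\<in>P. (\<exists>z. B = {z}) \<or> (\<exists>u\<in>insert x X. \<exists>v\<in>Y. B = {u, v})" by (auto simp: PM_def)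
    have e: "insert x X \<union> Y - {x, y} = X \<union> (Y - {y})" using xX xY yX by auto
    have p2: "partition_on (X \<union> (Y - {y})) (P - {{x, y}})"
      using part_remove[OF p P(2)] e by simp
    have "\<forall>B\<in>P - {{x, y}}. (\<exists>z. B = {z}) \<or> (\<exists>u\<in>X. \<exists>v\<in>Y - {y}. B = {u, v})"
    proof
      fix B assume B: "B \<in> P - {{x, y}}"
      then have "x \<notin> B" "y \<notin> B" using part_same[OF p _ P(2), of B] by auto
      then show "(\<exists>z. B = {z}) \<or> (\<exists>u\<in>X. \<exists>v\<in>Y - {y}. B = {u, v})" using b B by auto
    qed
    then show "P - {{x, y}} \<in> PM X (Y - {y})" using p2 by (simp add: PM_def)
  next
    fix Q assume Q: "Q \<in> PM X (Y - {y})"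
    have yX: "y \<notin> X" using y XY by auto
    from Q have p: "partition_on (X \<union> (Y - {y})) Q"
      and b: "\<forall>B\<in>Q. (\<exists>z. B = {z}) \<or> (\<exists>u\<in>X. \<exists>v\<in>Y - {y}. B = {u, v})" by (auto simp: PM_def)
    have "partition_on ((X \<union> (Y - {y})) \<union> {x, y}) (insert {x, y} Q)"
      using part_insert[OF p, of "{x, y}"] xX xY yX by (simp add: Un_insert_right)
    moreover have "(X \<union> (Y - {y})) \<union> {x, y} = insert x X \<union> Y" using y by auto
    moreover have "\<forall>B\<in>Q. (\<exists>z. B = {z}) \<or> (\<exists>u\<in>X. \<exists>v\<in>Y. B = {u, v})" using b by blast
    ultimately show "insert {x, y} Q \<in> PM (insert x X) Y" using y by (auto simp: PM_def)
  qed
  have disj: "A0 \<inter> (\<Union>y\<in>Y. A y) = {}"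
  proof -
    { fix P y assume "P \<in> A0" "P \<in> A y" "y \<in> Y"
      then have "partition_on (insert x X \<union> Y) P" "{x} \<in> P" "{x, y} \<in> P"
        unfolding A0_def A_def PM_def by auto
      then have "{x} = {x, y}" using part_same[of _ P "{x}" "{x, y}" x] by simp
      then have False using \<open>y \<in> Y\<close> xY by auto }
    then show ?thesis by blast
  qed
  have disjA: "\<forall>y\<in>Y. \<forall>y'\<in>Y. y \<noteq> y' \<longrightarrow> A y \<inter> A y' = {}"
  proof (intro ballI impI)
    fix y y' assume yy: "y \<in> Y" "y' \<in> Y" "y \<noteq> y'"
    { fix P assume "P \<in> A y" "P \<in> A y'"
      then have "partition_on (insert x X \<union> Y) P" "{x, y} \<in> P" "{x, y'} \<in> P"
        unfolding A_def PM_def by auto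
      then have "{x, y} = {x, y'}" using part_same[of _ P "{x, y}" "{x, y'}" x] by simp
      then have False using yy xY by (auto simp: doubleton_eq_iff) }
    then show "A y \<inter> A y' = {}" by blast
  qed
  have finA: "finite (A y)" for y using fin unfolding A_def by simp
  have finA0: "finite A0" using fin unfolding A0_def by simp
  have fY: "finite Y" using insert.prems by simp
  have "card (PM (insert x X) Y) = card A0 + card (\<Union>y\<in>Y. A y)"
    unfolding split by (rule card_Un_disjoint[OF finA0 finite_UN_I[OF fY finA] disj])
  also have "card (\<Union>y\<in>Y. A y) = (\<Sum>y\<in>Y. card (A y))"
    by (rule card_UN_disjoint[OF fY]) (use finA disjA in auto)
  also have "\<dots> = (\<Sum>y\<in>Y. M (card X) (card Y - 1))"
  proof (rule sum.cong[OF refl])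
    fix y assume y: "y \<in> Y"
    have "card (A y) = card (PM X (Y - {y}))" by (rule cy[OF y])
    also have "\<dots> = M (card X) (card (Y - {y}))"
      using insert.IH[of "Y - {y}"] insert.prems XY by auto
    finally show "card (A y) = M (card X) (card Y - 1)" using y by simp
  qed
  also have "card A0 = M (card X) (card Y)" using c0 insert.IH[of Y] insert.prems XY by simp
  finally show ?case using insert.hyps by simp
qed



definition c1 :: "nat \<Rightarrow> nat \<Rightarrow> nat \<Rightarrow> nat" where
  "c1 n a = restrict (\<lambda>i. if i \<le> a then 2 else 1) {1..n}"
definition c2 :: "nat \<Rightarrow> nat \<Rightarrow> nat \<Rightarrow> nat" where
  "c2 n a = restrict (\<lambda>i. if i \<le> a then 2 else if i = Suc a then 1 else if i = Suc (Suc a) then 2 else 1) {1..n}"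

definition A1 where "A1 n a = (\<lambda>P. (P, c1 n a)) ` PM {1..a} {Suc a..n}"
definition A2 where "A2 n a = (\<lambda>Q. (insert {Suc a, Suc (Suc a)} Q, c2 n a)) ` PM {1..a} {a+3..n}"

lemma sound1:
  assumes a: "a \<le> n" and P: "P \<in> PM {1..a} {Suc a..n}"
  shows "(P, c1 n a) \<in> avoiders n"
proof -
  have U: "{1..a} \<union> {Suc a..n} = {1..n}" using a by auto
  have p: "partition_on {1..n} P" and b: "\<forall>B\<in>P. (\<exists>z. B = {z}) \<or> (\<exists>x\<in>{1..a}. \<exists>y\<in>{Suc a..n}. B = {x, y})"
    using P U by (auto simp: PM_def)
  have sub: "B \<in> P \<Longrightarrow> B \<subseteq> {1..n}" for B using partition_onD1[OF p] by blast
  have cp: "(P, c1 n a) \<in> colored_partitions n"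
    using p by (auto simp: colored_partitions_def c1_def)
  have n1: "\<not> contains_11_11 (P, c1 n a)"
  proof
    assume "contains_11_11 (P, c1 n a)"
    then obtain B i j where B: "B \<in> P" "i \<in> B" "j \<in> B" "i < j" "c1 n a i = c1 n a j"
      unfolding contains_11_11_def by auto
    have "i \<in> {1..n}" "j \<in> {1..n}" using sub[OF B(1)] B by auto
    then have ci: "c1 n a i = (if i \<le> a then 2 else 1)" "c1 n a j = (if j \<le> a then 2 else 1)"
      by (auto simp: c1_def)
    from b B(1) consider z where "B = {z}" | x y where "x \<in> {1..a}" "y \<in> {Suc a..n}" "B = {x, y}"
      by blast
    then show False
    proof cases
      case 1 then show False using B by auto
    next
      case 2
      then have "i = x" "j = y" using B by auto
      then show False using 2 B(5) ci by auto
    qed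
  qed
  have n2: "\<not> contains_11_22 (P, c1 n a)"
  proof
    assume "contains_11_22 (P, c1 n a)"
    then obtain B B' i j where B: "B \<in> P" "B' \<in> P" "i \<in> B" "j \<in> B'" "i < j" "c1 n a i = 1" "c1 n a j = 2"
      unfolding contains_11_22_def by auto
    have "i \<in> {1..n}" "j \<in> {1..n}" using sub[OF B(1)] sub[OF B(2)] B by auto
    then have ci: "c1 n a i = (if i \<le> a then 2 else 1)" "c1 n a j = (if j \<le> a then 2 else 1)"
      by (auto simp: c1_def)
    have "\<not> i \<le> a" using B(6) ci(1) by (cases "i \<le> a") auto
    moreover have "j \<le> a" using B(7) ci(2) by (cases "j \<le> a") auto
    ultimately show False using B(5) by simp
  qed
  show ?thesis using cp n1 n2 by (simp add: avoiders_def)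
qed

lemma c2_val: "i \<in> {1..n} \<Longrightarrow> (c2 n a i = 1 \<longleftrightarrow> a < i \<and> i \<noteq> Suc (Suc a)) \<and> (c2 n a i = 2 \<longleftrightarrow> i \<le> a \<or> i = Suc (Suc a))"
  unfolding c2_def by auto

lemma sound2:
  assumes a: "Suc (Suc a) \<le> n" and Q: "Q \<in> PM {1..a} {a+3..n}"
  shows "(insert {Suc a, Suc (Suc a)} Q, c2 n a) \<in> avoiders n"
proof -
  define P where "P = insert {Suc a, Suc (Suc a)} Q"
  have q: "partition_on ({1..a} \<union> {a+3..n}) Q" and b: "\<forall>B\<in>Q. (\<exists>z. B = {z}) \<or> (\<exists>x\<in>{1..a}. \<exists>y\<in>{a+3..n}. B = {x, y})"
    using Q by (auto simp: PM_def)
  have U: "{1..a} \<union> {a+3..n} \<union> {Suc a, Suc (Suc a)} = {1..n}" using a by auto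
  have p: "partition_on {1..n} P"
    using part_insert[OF q, of "{Suc a, Suc (Suc a)}"] U unfolding P_def by auto
  have sub: "B \<in> P \<Longrightarrow> B \<subseteq> {1..n}" for B using partition_onD1[OF p] by blast
  have cp: "(P, c2 n a) \<in> colored_partitions n"
    using p by (auto simp: colored_partitions_def c2_def)
  have n1: "\<not> contains_11_11 (P, c2 n a)"
  proof
    assume "contains_11_11 (P, c2 n a)"
    then obtain B i j where B: "B \<in> P" "i \<in> B" "j \<in> B" "i < j" "c2 n a i = c2 n a j"
      unfolding contains_11_11_def by auto
    have "i \<in> {1..n}" "j \<in> {1..n}" using sub[OF B(1)] B by auto
    note v = c2_val[OF this(1), of a] c2_val[OF this(2), of a]
    have ci: "c2 n a i = 1 \<or> c2 n a i = 2" using v by linarith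
    from B(1) consider "B = {Suc a, Suc (Suc a)}" | "B \<in> Q" unfolding P_def by blast
    then show False
    proof cases
      case 1
      then have "i = Suc a" "j = Suc (Suc a)" using B(2-4) by auto
      then show False using v B(5) by auto
    next
      case 2
      from b 2 consider z where "B = {z}" | x y where "x \<in> {1..a}" "y \<in> {a+3..n}" "B = {x, y}"
        by blast
      then show False
      proof cases
        case 1 then show False using B by auto
      next
        case 3: 2
        then have "i = x" "j = y" using B(2-4) by auto
        then show False using 3 v B(5) ci by auto
      qed
    qed
  qed
  have n2: "\<not> contains_11_22 (P, c2 n a)"
  proof
    assume "contains_11_22 (P, c2 n a)"
    then obtain B B' i j where B: "B \<in> P" "B' \<in> P" "B \<noteq> B'" "i \<in> B" "j \<in> B'" "i < j" "c2 n a i = 1" "c2 n a j = 2"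
      unfolding contains_11_22_def by auto
    have "i \<in> {1..n}" "j \<in> {1..n}" using sub[OF B(1)] sub[OF B(2)] B by auto
    note v = c2_val[OF this(1), of a] c2_val[OF this(2), of a]
    have ij: "i = Suc a" "j = Suc (Suc a)" using v B(6-8) by auto
    have B0: "{Suc a, Suc (Suc a)} \<in> P" unfolding P_def by simp
    have "B = {Suc a, Suc (Suc a)}" using part_same[OF p B(1) B0, of i] B ij by auto
    moreover have "B' = {Suc a, Suc (Suc a)}" using part_same[OF p B(2) B0, of j] B ij by auto
    ultimately show False using B by simp
  qed
  show ?thesis using cp n1 n2 unfolding P_def[symmetric] by (simp add: avoiders_def)
qed



lemma complete:
  assumes av: "(P, c) \<in> avoiders n"
  shows "(\<exists>a\<le>n. c = c1 n a \<and> P \<in> PM {1..a} {Suc a..n}) \<or>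
         (\<exists>a. Suc (Suc a) \<le> n \<and> c = c2 n a \<and> (\<exists>Q\<in>PM {1..a} {a+3..n}. P = insert {Suc a, Suc (Suc a)} Q))"
proof -
  have p: "partition_on {1..n} P" and cE: "c \<in> {1..n} \<rightarrow>\<^sub>E {1, 2}"
    and n11: "\<not> contains_11_11 (P, c)" and n22: "\<not> contains_11_22 (P, c)"
    using av by (auto simp: avoiders_def colored_partitions_def)
  have col: "c i = 1 \<or> c i = 2" if "i \<in> {1..n}" for i
  proof -
    have "c i \<in> {1, 2}" by (rule PiE_mem[OF cE that])
    then show ?thesis by simp
  qed
  have arb: "c i = undefined" if "i \<notin> {1..n}" for i by (rule PiE_arb[OF cE that])
  have no11: "c i \<noteq> c j" if "B \<in> P" "i \<in> B" "j \<in> B" "i < j" for B i j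
    using n11 that unfolding contains_11_11_def by auto
  have no22: False if "B \<in> P" "B' \<in> P" "B \<noteq> B'" "i \<in> B" "j \<in> B'" "i < j" "c i = 1" "c j = 2" for B B' i j
  proof -
    have "contains_11_22 (P, c)" unfolding contains_11_22_def using that by auto
    then show False using n22 by simp
  qed
  have blk: "\<exists>B\<in>P. i \<in> B" if "i \<in> {1..n}" for i using partition_onD1[OF p] that by blast
  have sub: "B \<subseteq> {1..n}" if "B \<in> P" for B using partition_onD1[OF p] that by blast
  have diffc: "c i \<noteq> c j" if "B \<in> P" "i \<in> B" "j \<in> B" "i \<noteq> j" for B i j
  proof (cases "i < j")
    case True then show ?thesis using no11 that by blast
  next
    case False then have "j < i" using that by simp
    then show ?thesis using no11[of B j i] that by auto
  qed
  have nothree: False if "B \<in> P" "i \<in> B" "j \<in> B" "k \<in> B" "i \<noteq> j" "j \<noteq> k" "i \<noteq> k" for B i j k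
  proof -
    have "c i \<noteq> c j" "c j \<noteq> c k" "c i \<noteq> c k"
      using diffc[OF that(1) that(2) that(3) that(5)] diffc[OF that(1) that(3) that(4) that(6)]
        diffc[OF that(1) that(2) that(4) that(7)] by auto
    moreover have "i \<in> {1..n}" "j \<in> {1..n}" "k \<in> {1..n}" using sub[OF that(1)] that(2-4) by auto
    then have "c i = 1 \<or> c i = 2" "c j = 1 \<or> c j = 2" "c k = 1 \<or> c k = 2"
      using col by auto
    ultimately show False by auto
  qed
  have K: "\<exists>B\<in>P. i \<in> B \<and> j \<in> B" if ij: "i \<in> {1..n}" "j \<in> {1..n}" "i < j" "c i = 1" "c j = 2" for i j
  proof -
    obtain Bi where "Bi \<in> P" "i \<in> Bi" using blk[OF ij(1)] by blast
    moreover obtain Bj where "Bj \<in> P" "j \<in> Bj" using blk[OF ij(2)] by blast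
    ultimately show ?thesis using no22[of Bi Bj i j] ij by (cases "Bi = Bj") auto
  qed
  have shape: "(\<exists>z. B = {z}) \<or> (\<exists>x y. x < y \<and> B = {x, y})" if B: "B \<in> P" for B
  proof -
    have ne: "B \<noteq> {}" using partition_onD3[OF p] B by blast
    have fin: "finite B" using sub[OF B] finite_subset by blast
    define x where "x = Min B"
    have xB: "x \<in> B" unfolding x_def using Min_in[OF fin ne] .
    show ?thesis
    proof (cases "B = {x}")
      case True then show ?thesis by blast
    next
      case False
      then obtain y where y: "y \<in> B" "y \<noteq> x" using xB by blast
      have "x \<le> y" unfolding x_def using Min_le[OF fin y(1)] .
      then have xy: "x < y" using y by simp
      have "B = {x, y}"
      proof
        show "B \<subseteq> {x, y}"
        proof
          fix z assume "z \<in> B"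
          then show "z \<in> {x, y}" using nothree[OF B xB y(1), of z] y by auto
        qed
        show "{x, y} \<subseteq> B" using xB y by blast
      qed
      then show ?thesis using xy by blast
    qed
  qed
  show ?thesis
  proof (cases "\<exists>i j. i \<in> {1..n} \<and> j \<in> {1..n} \<and> i < j \<and> c i = 1 \<and> c j = 2")
    case False
    define S where "S = {i \<in> {1..n}. c i = 2}"
    define a where "a = (if S = {} then 0 else Max S)"
    have finS: "finite S" unfolding S_def by simp
    have an: "a \<le> n" unfolding a_def S_def using finS S_def by (auto intro: Max.boundedI)
    have ca: "c i = 2 \<longleftrightarrow> i \<le> a" if i: "i \<in> {1..n}" for i
    proof
      assume "c i = 2"
      then have "i \<in> S" using i unfolding S_def by simp
      then show "i \<le> a" unfolding a_def using finS by auto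
    next
      assume ia: "i \<le> a"
      then have Sne: "S \<noteq> {}" using i unfolding a_def by (auto split: if_splits)
      then have aS: "a \<in> S" unfolding a_def using Max_in[OF finS] by simp
      show "c i = 2"
      proof (rule ccontr)
        assume "c i \<noteq> 2"
        then have "c i = 1" using col i by blast
        moreover have "i \<noteq> a" using aS \<open>c i \<noteq> 2\<close> unfolding S_def by auto
        ultimately show False using False aS i ia unfolding S_def by auto
      qed
    qed
    have cc: "c = c1 n a"
    proof
      fix i show "c i = c1 n a i"
      proof (cases "i \<in> {1..n}")
        case True
        then show ?thesis using ca[OF True] col[OF True] unfolding c1_def by auto
      next
        case False then show ?thesis using arb unfolding c1_def by auto
      qed
    qed
    have U: "{1..a} \<union> {Suc a..n} = {1..n}" using an by auto
    have "P \<in> PM {1..a} {Suc a..n}"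
      unfolding PM_def
    proof (intro CollectI conjI ballI)
      show "partition_on ({1..a} \<union> {Suc a..n}) P" using p U by simp
      fix B assume B: "B \<in> P"
      show "(\<exists>x. B = {x}) \<or> (\<exists>x\<in>{1..a}. \<exists>y\<in>{Suc a..n}. B = {x, y})"
        using shape[OF B]
      proof
        assume "\<exists>x y. x < y \<and> B = {x, y}"
        then obtain x y where xy: "x < y" "B = {x, y}" by blast
        have xn: "x \<in> {1..n}" "y \<in> {1..n}" using sub[OF B] xy by auto
        have d: "c x \<noteq> c y" using no11[OF B _ _ xy(1)] xy by simp
        have "\<not> (c x = 1 \<and> c y = 2)" using False xn xy by blast
        then have "c x = 2" "c y \<noteq> 2" using d col[OF xn(1)] col[OF xn(2)] by auto
        then have "x \<le> a" "\<not> y \<le> a" using ca xn by auto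
        then have "x \<in> {1..a}" "y \<in> {Suc a..n}" using xn by auto
        then show ?thesis using xy by blast
      qed auto
    qed
    then show ?thesis using an cc by blast
  next
    case True
    then obtain i j where ij: "i \<in> {1..n}" "j \<in> {1..n}" "i < j" "c i = 1" "c j = 2" by blast
    obtain B0 where B0: "B0 \<in> P" "i \<in> B0" "j \<in> B0" using K[OF ij] by blast
    have samej: "B = B0" if "B \<in> P" "j \<in> B" for B using part_same[OF p that(1) B0(1) that(2) B0(3)] .
    have samei: "B = B0" if "B \<in> P" "i \<in> B" for B using part_same[OF p that(1) B0(1) that(2) B0(2)] .
    have notin: "k \<notin> B0" if "k \<noteq> i" "k \<noteq> j" for k using nothree[OF B0(1) B0(2) B0(3), of k] that ij(3) by auto
    have between: False if k: "i < k" "k < j" for k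
    proof -
      have kn: "k \<in> {1..n}" using k ij by auto
      show False
      proof (cases "c k = 1")
        case True
        obtain B where "B \<in> P" "k \<in> B" "j \<in> B" using K[OF kn ij(2) k(2) True ij(5)] by blast
        then show False using samej notin[of k] k by auto
      next
        case False
        then have "c k = 2" using col kn by blast
        then obtain B where "B \<in> P" "i \<in> B" "k \<in> B" using K[OF ij(1) kn k(1) ij(4)] by blast
        then show False using samei notin[of k] k by auto
      qed
    qed
    have jSi: "j = Suc i" using between[of "Suc i"] ij(3) by (cases "j = Suc i") auto
    define a where "a = i - 1"
    have ia: "i = Suc a" using ij(1) unfolding a_def by auto
    have ja: "j = Suc (Suc a)" using jSi ia by simp
    have an: "Suc (Suc a) \<le> n" using ij(2) ja by simp
    have cv: "c k = (if k \<le> a then 2 else if k = Suc a then 1 else if k = Suc (Suc a) then 2 else 1)"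
      if k: "k \<in> {1..n}" for k
    proof -
      consider "k \<le> a" | "k = Suc a" | "k = Suc (Suc a)" | "Suc (Suc a) < k" by linarith
      then show ?thesis
      proof cases
        case 1
        have "c k = 2"
        proof (rule ccontr)
          assume "c k \<noteq> 2" then have "c k = 1" using col k by blast
          then obtain B where "B \<in> P" "k \<in> B" "j \<in> B" using K[OF k ij(2) _ _ ij(5)] 1 ja by fastforce
          then show False using samej notin[of k] 1 ia ja by auto
        qed
        then show ?thesis using 1 by simp
      next
        case 2 then show ?thesis using ij ia by simp
      next
        case 3 then show ?thesis using ij ja by simp
      next
        case 4
        have "c k = 1"
        proof (rule ccontr)
          assume "c k \<noteq> 1" then have "c k = 2" using col k by blast
          then obtain B where "B \<in> P" "i \<in> B" "k \<in> B" using K[OF ij(1) k _ ij(4)] 4 ia by fastforce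
          then show False using samei notin[of k] 4 ia ja by auto
        qed
        then show ?thesis using 4 by simp
      qed
    qed
    have cc: "c = c2 n a"
    proof
      fix k show "c k = c2 n a k"
      proof (cases "k \<in> {1..n}")
        case True
        then show ?thesis using cv[OF True] unfolding c2_def by simp
      next
        case False then show ?thesis using arb unfolding c2_def by auto
      qed
    qed
    have B0eq: "B0 = {Suc a, Suc (Suc a)}" using B0 notin ia ja by blast
    define Q where "Q = P - {B0}"
    have PQ: "P = insert {Suc a, Suc (Suc a)} Q" unfolding Q_def using B0 B0eq by blast
    have U: "{1..n} - B0 = {1..a} \<union> {a+3..n}" using B0eq an by auto
    have "Q \<in> PM {1..a} {a+3..n}"
      unfolding PM_def
    proof (intro CollectI conjI ballI)
      show "partition_on ({1..a} \<union> {a+3..n}) Q" using part_remove[OF p B0(1)] U unfolding Q_def by simp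
      fix B assume BQ: "B \<in> Q"
      then have B: "B \<in> P" "B \<noteq> B0" unfolding Q_def by auto
      have nij: "Suc a \<notin> B" "Suc (Suc a) \<notin> B" using samei samej B ia ja by auto
      show "(\<exists>x. B = {x}) \<or> (\<exists>x\<in>{1..a}. \<exists>y\<in>{a+3..n}. B = {x, y})"
        using shape[OF B(1)]
      proof
        assume "\<exists>x y. x < y \<and> B = {x, y}"
        then obtain x y where xy: "x < y" "B = {x, y}" by blast
        have xn: "x \<in> {1..n}" "y \<in> {1..n}" using sub[OF B(1)] xy by auto
        have d: "c x \<noteq> c y" using no11[OF B(1) _ _ xy(1)] xy by simp
        have xa: "x \<noteq> Suc a" "x \<noteq> Suc (Suc a)" "y \<noteq> Suc a" "y \<noteq> Suc (Suc a)" using nij xy by auto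
        have vx: "c x = (if x \<le> a then 2 else 1)" "c y = (if y \<le> a then 2 else 1)"
          using cv[OF xn(1)] cv[OF xn(2)] xa by auto
        have "x \<le> a" "\<not> y \<le> a" using vx d xy(1) by (auto split: if_splits)
        then have "x \<in> {1..a}" "y \<in> {a+3..n}" using xn xa by auto
        then show ?thesis using xy by blast
      qed auto
    qed
    then show ?thesis using an cc PQ by blast
  qed
qed



lemma c1_val: "i \<in> {1..n} \<Longrightarrow> c1 n a i = (if i \<le> a then 2 else 1)"
  by (simp add: c1_def)

lemma c1_inj: assumes "a \<le> n" "a' \<le> n" "c1 n a = c1 n a'" shows "a = a'"
proof (rule ccontr)
  assume ne: "a \<noteq> a'"
  define m where "m = Suc (min a a')"
  have "c1 n a m = c1 n a' m" using assms(3) by simp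
  moreover have mn: "m \<in> {1..n}" using assms ne unfolding m_def by auto
  ultimately have e: "(if m \<le> a then 2 else 1) = (if m \<le> a' then (2::nat) else 1)"
    using c1_val[OF mn] by metis
  show False
  proof (cases "a < a'")
    case True then have "\<not> m \<le> a" "m \<le> a'" unfolding m_def by auto
    then show False using e by simp
  next
    case False then have "a' < a" using ne by simp
    then have "m \<le> a" "\<not> m \<le> a'" unfolding m_def by auto
    then show False using e by simp
  qed
qed

lemma c2_inj: assumes "Suc (Suc a) \<le> n" "Suc (Suc a') \<le> n" "c2 n a = c2 n a'" shows "a = a'"
proof (rule ccontr)
  assume ne: "a \<noteq> a'"
  define m where "m = Suc (min a a')"
  have "c2 n a m = c2 n a' m" using assms(3) by simp
  moreover have mn: "m \<in> {1..n}" using assms ne unfolding m_def by auto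
  ultimately have e: "(c2 n a m = 1) = (c2 n a' m = 1)" by simp
  show False
  proof (cases "a < a'")
    case True then have "m = Suc a" "m \<le> a'" unfolding m_def by auto
    then show False using e c2_val[OF mn, of a] c2_val[OF mn, of a'] by auto
  next
    case False then have "a' < a" using ne by simp
    then have "m = Suc a'" "m \<le> a" unfolding m_def by auto
    then show False using e c2_val[OF mn, of a] c2_val[OF mn, of a'] by auto
  qed
qed

lemma c12: assumes "a \<le> n" "Suc (Suc a') \<le> n" "c1 n a = c2 n a'" shows False
proof -
  have m1: "Suc a' \<in> {1..n}" and m2: "Suc (Suc a') \<in> {1..n}" using assms by auto
  have "c1 n a (Suc a') = c2 n a' (Suc a')" "c1 n a (Suc (Suc a')) = c2 n a' (Suc (Suc a'))"
    using assms(3) by simp_all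
  moreover have "c2 n a' (Suc a') = 1" "c2 n a' (Suc (Suc a')) = 2"
    using c2_val[OF m1, of a'] c2_val[OF m2, of a'] by auto
  ultimately have e: "c1 n a (Suc a') = 1" "c1 n a (Suc (Suc a')) = 2" by simp_all
  have "\<not> Suc a' \<le> a" using e(1) c1_val[OF m1, of a] by (cases "Suc a' \<le> a") auto
  moreover have "Suc (Suc a') \<le> a" using e(2) c1_val[OF m2, of a] by (cases "Suc (Suc a') \<le> a") auto
  ultimately show False by simp
qed

lemma avoiders_eq: "avoiders n = (\<Union>a\<in>{..n}. A1 n a) \<union> (\<Union>a\<in>{..<n-1}. A2 n a)"
proof
  show "avoiders n \<subseteq> (\<Union>a\<in>{..n}. A1 n a) \<union> (\<Union>a\<in>{..<n-1}. A2 n a)"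
  proof
    fix s assume s: "s \<in> avoiders n"
    obtain P c where sPc: "s = (P, c)" by (cases s)
    from complete[of P c n] s sPc
    consider a where "a \<le> n" "c = c1 n a" "P \<in> PM {1..a} {Suc a..n}"
      | a Q where "Suc (Suc a) \<le> n" "c = c2 n a" "Q \<in> PM {1..a} {a+3..n}" "P = insert {Suc a, Suc (Suc a)} Q"
      by blast
    then show "s \<in> (\<Union>a\<in>{..n}. A1 n a) \<union> (\<Union>a\<in>{..<n-1}. A2 n a)"
    proof cases
      case 1 then show ?thesis unfolding sPc A1_def by blast
    next
      case 2
      then have "a \<in> {..<n-1}" by auto
      then show ?thesis using 2 unfolding sPc A2_def by blast
    qed
  qed
  show "(\<Union>a\<in>{..n}. A1 n a) \<union> (\<Union>a\<in>{..<n-1}. A2 n a) \<subseteq> avoiders n"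
  proof (rule Un_least; rule UN_least)
    fix a assume "a \<in> {..n}"
    then show "A1 n a \<subseteq> avoiders n" unfolding A1_def using sound1[of a n] by auto
  next
    fix a assume "a \<in> {..<n-1}"
    then have "Suc (Suc a) \<le> n" by auto
    then show "A2 n a \<subseteq> avoiders n" unfolding A2_def using sound2[of a n] by auto
  qed
qed

lemma card_A1: "a \<le> n \<Longrightarrow> card (A1 n a) = M a (n - a)"
proof -
  assume a: "a \<le> n"
  have "card (A1 n a) = card (PM {1..a} {Suc a..n})"
    unfolding A1_def by (rule card_image) (simp add: inj_on_def)
  also have "\<dots> = M (card {1..a}) (card {Suc a..n})" by (rule card_PM) auto
  finally show ?thesis by simp
qed

lemma card_A2: "Suc (Suc a) \<le> n \<Longrightarrow> card (A2 n a) = M a (n - a - 2)"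
proof -
  assume a: "Suc (Suc a) \<le> n"
  have nin: "{Suc a, Suc (Suc a)} \<notin> Q" if "Q \<in> PM {1..a} {a+3..n}" for Q
  proof
    assume "{Suc a, Suc (Suc a)} \<in> Q"
    then have "Suc a \<in> \<Union>Q" by blast
    moreover have "\<Union>Q = {1..a} \<union> {a+3..n}" using that partition_onD1[of "{1..a} \<union> {a+3..n}" Q] unfolding PM_def by auto
    ultimately show False by simp
  qed
  have "card (A2 n a) = card (PM {1..a} {a+3..n})"
    unfolding A2_def
  proof (rule card_image, rule inj_onI)
    fix Q Q' assume "Q \<in> PM {1..a} {a+3..n}" "Q' \<in> PM {1..a} {a+3..n}"
      "(insert {Suc a, Suc (Suc a)} Q, c2 n a) = (insert {Suc a, Suc (Suc a)} Q', c2 n a)"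
    then show "Q = Q'" using nin by (metis Pair_inject insert_ident)
  qed
  also have "\<dots> = M (card {1..a}) (card {a+3..n})" by (rule card_PM) auto
  finally show ?thesis by simp
qed

lemma finA1: "finite (A1 n a)" unfolding A1_def by (simp add: finite_PM)
lemma finA2: "finite (A2 n a)" unfolding A2_def by (simp add: finite_PM)

lemma snd_A1: "s \<in> A1 n a \<Longrightarrow> snd s = c1 n a"
  unfolding A1_def by (erule imageE) simp

lemma snd_A2: "s \<in> A2 n a \<Longrightarrow> snd s = c2 n a"
  unfolding A2_def by (erule imageE) simp

lemma card_avoiders: "card (avoiders n) = (\<Sum>a\<le>n. M a (n - a)) + (\<Sum>a<n-1. M a (n - a - 2))"
proof -
  have d1: "\<forall>a\<in>{..n}. \<forall>a'\<in>{..n}. a \<noteq> a' \<longrightarrow> A1 n a \<inter> A1 n a' = {}"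
  proof (intro ballI impI)
    fix a a' assume aa: "a \<in> {..n}" "a' \<in> {..n}" "a \<noteq> a'"
    { fix s assume "s \<in> A1 n a" "s \<in> A1 n a'"
      then have "snd s = c1 n a" "snd s = c1 n a'" unfolding A1_def by auto
      then have "c1 n a = c1 n a'" by simp
      then have False using c1_inj[of a n a'] aa by auto }
    then show "A1 n a \<inter> A1 n a' = {}" by blast
  qed
  have d2: "\<forall>a\<in>{..<n-1}. \<forall>a'\<in>{..<n-1}. a \<noteq> a' \<longrightarrow> A2 n a \<inter> A2 n a' = {}"
  proof (intro ballI impI)
    fix a a' assume "a \<in> {..<n-1}" "a' \<in> {..<n-1}" "a \<noteq> a'"
    then have aa: "Suc (Suc a) \<le> n" "Suc (Suc a') \<le> n" "a \<noteq> a'" by auto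
    { fix s assume s1: "s \<in> A2 n a" and s2: "s \<in> A2 n a'"
      have "c2 n a = c2 n a'" using snd_A2[OF s1] snd_A2[OF s2] by simp
      then have False using c2_inj[of a n a'] aa by auto }
    then show "A2 n a \<inter> A2 n a' = {}" by blast
  qed
  have d12: "(\<Union>a\<in>{..n}. A1 n a) \<inter> (\<Union>a\<in>{..<n-1}. A2 n a) = {}"
  proof -
    { fix a a' s assume "a \<le> n" "a' < n - 1" and s1: "s \<in> A1 n a" and s2: "s \<in> A2 n a'"
      have "c1 n a = c2 n a'" using snd_A1[OF s1] snd_A2[OF s2] by simp
      moreover have "Suc (Suc a') \<le> n" using \<open>a' < n - 1\<close> by auto
      ultimately have False using c12[of a n a'] \<open>a \<le> n\<close> by auto }
    then show ?thesis by blast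
  qed
  have "card (avoiders n) = card (\<Union>a\<in>{..n}. A1 n a) + card (\<Union>a\<in>{..<n-1}. A2 n a)"
    unfolding avoiders_eq
    by (rule card_Un_disjoint[OF finite_UN_I[OF finite_atMost finA1] finite_UN_I[OF finite_lessThan finA2] d12])
  also have "card (\<Union>a\<in>{..n}. A1 n a) = (\<Sum>a\<le>n. card (A1 n a))"
    by (rule card_UN_disjoint[OF finite_atMost _ d1]) (simp add: finA1)
  also have "\<dots> = (\<Sum>a\<le>n. M a (n - a))" by (rule sum.cong[OF refl]) (simp add: card_A1)
  also have "card (\<Union>a\<in>{..<n-1}. A2 n a) = (\<Sum>a<n-1. card (A2 n a))"
    by (rule card_UN_disjoint[OF finite_lessThan _ d2]) (simp add: finA2)
  also have "\<dots> = (\<Sum>a<n-1. M a (n - a - 2))"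
    by (rule sum.cong[OF refl]) (rule card_A2, simp)
  finally show ?thesis .
qed



lemma L1: "(\<Sum>a\<le>Suc m. M a (Suc m - a)) = 1 + (\<Sum>a\<le>m. M a (m - a)) + (\<Sum>a\<le>m. (m - a) * M a (m - a - 1))"
proof -
  have "(\<Sum>a\<le>Suc m. M a (Suc m - a)) = M 0 (Suc m) + (\<Sum>a\<le>m. M (Suc a) (Suc m - Suc a))"
    by (simp only: sum.atMost_Suc_shift minus_nat.diff_0)
  also have "\<dots> = 1 + (\<Sum>a\<le>m. M a (m - a) + (m - a) * M a (m - a - 1))"
    by simp
  finally show ?thesis by (simp add: sum.distrib)
qed

lemma R1: "(\<Sum>i=1..Suc m. M (i - 1) (Suc m - i)) = (\<Sum>a\<le>m. M a (m - a))"
proof -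
  have "(\<Sum>i=Suc 0..Suc m. M (i - 1) (Suc m - i)) = (\<Sum>a=0..m. M (Suc a - 1) (Suc m - Suc a))"
    by (rule sum.shift_bounds_cl_Suc_ivl)
  then show ?thesis by (simp add: atLeast0AtMost)
qed

lemma R3: "(\<Sum>i=1..Suc m - 1. M (i - 1) (Suc m - i - 1)) = (\<Sum>a<m. M a (m - a - 1))"
proof -
  have "{1..Suc m - 1} = {Suc 0..<Suc m}" by auto
  then have "(\<Sum>i=1..Suc m - 1. M (i - 1) (Suc m - i - 1)) = (\<Sum>i=Suc 0..<Suc m. M (i - 1) (Suc m - i - 1))"
    by simp
  also have "\<dots> = (\<Sum>a=0..<m. M (Suc a - 1) (Suc m - Suc a - 1))"
    by (rule sum.shift_bounds_Suc_ivl)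
  finally show ?thesis by (simp add: atLeast0LessThan)
qed

lemma R2: "(\<Sum>i=2..Suc m. (i - 1) * M (i - 2) (Suc m - i)) = (\<Sum>a\<le>m. (m - a) * M a (m - a - 1))"
proof (cases m)
  case 0 then show ?thesis by simp
next
  case (Suc k)
  have "(\<Sum>i=Suc (Suc 0)..Suc (Suc k). (i - 1) * M (i - 2) (Suc (Suc k) - i))
      = (\<Sum>i=Suc 0..Suc k. (Suc i - 1) * M (Suc i - 2) (Suc (Suc k) - Suc i))"
    by (rule sum.shift_bounds_cl_Suc_ivl)
  also have "\<dots> = (\<Sum>a=0..k. (Suc (Suc a) - 1) * M (Suc (Suc a) - 2) (Suc (Suc k) - Suc (Suc a)))"
    by (rule sum.shift_bounds_cl_Suc_ivl)
  also have "\<dots> = (\<Sum>a=0..k. Suc a * M a (k - a))" by simp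
  also have "\<dots> = (\<Sum>a=0..k. Suc (k + 0 - a) * M (k + 0 - a) (k - (k + 0 - a)))"
    by (rule sum.atLeastAtMost_rev)
  also have "\<dots> = (\<Sum>a=0..k. (Suc k - a) * M a (k - a))"
    by (rule sum.cong[OF refl]) (auto simp: M_sym[of "k - _"] Suc_diff_le)
  also have "\<dots> = (\<Sum>a\<le>Suc k. (Suc k - a) * M a (Suc k - a - 1))"
    by (simp add: atLeast0AtMost)
  finally show ?thesis using Suc by (simp add: numeral_2_eq_2)
qed

lemma T1: "(\<Sum>j\<le>n. \<Sum>i=1..n. ((i - 1) choose j) * ((n - i) choose j) * fact j) = (\<Sum>i=1..n. M (i - 1) (n - i))"
  by (subst sum.swap, rule sum.cong[OF refl], rule M_ext) auto

lemma T3: "(\<Sum>j\<le>n. \<Sum>i=1..n-1. ((i - 1) choose j) * ((n - i - 1) choose j) * fact j) = (\<Sum>i=1..n-1. M (i - 1) (n - i - 1))"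
  by (subst sum.swap, rule sum.cong[OF refl], rule M_ext) auto

lemma T2: "(\<Sum>j\<le>n. \<Sum>i=2..n. (i - 1) * ((i - 2) choose j) * ((n - i) choose j) * fact j) = (\<Sum>i=2..n. (i - 1) * M (i - 2) (n - i))"
proof (subst sum.swap, rule sum.cong[OF refl])
  fix i assume i: "i \<in> {2..n}"
  have "(\<Sum>j\<le>n. (i - 1) * ((i - 2) choose j) * ((n - i) choose j) * fact j)
      = (i - 1) * (\<Sum>j\<le>n. ((i - 2) choose j) * ((n - i) choose j) * fact j)"
    by (simp add: sum_distrib_left mult.assoc)
  also have "\<dots> = (i - 1) * M (i - 2) (n - i)" using i by (subst M_ext) auto
  finally show "(\<Sum>j\<le>n. (i - 1) * ((i - 2) choose j) * ((n - i) choose j) * fact j) = (i - 1) * M (i - 2) (n - i)" .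
qed


theorem mainTheorem3:
  fixes n :: nat
  assumes "n \<ge> 1"
  shows "card (avoiders n) =
      (\<Sum>j\<le>n. \<Sum>i=1..n. ((i - 1) choose j) * ((n - i) choose j) * fact j)
    + (\<Sum>j\<le>n. \<Sum>i=2..n. (i - 1) * ((i - 2) choose j) * ((n - i) choose j) * fact j)
    + (\<Sum>j\<le>n. \<Sum>i=1..n-1. ((i - 1) choose j) * ((n - i - 1) choose j) * fact j)
    + 1"
proof -
  obtain m where n: "n = Suc m" using assms by (cases n) auto
  have L2: "(\<Sum>a<Suc m - 1. M a (Suc m - a - 2)) = (\<Sum>a<m. M a (m - a - 1))" by simp
  show ?thesis
    unfolding card_avoiders T1 T2 T3 unfolding n
    using L1[of m] R1[of m] R2[of m] R3[of m] L2 by linarith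
qed

end
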